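(* Let training data $(\mathbf{x}_1,y_1),\dots,(\mathbf{x}_n,y_n)$ satisfy: $\|\mathbf{x}_i\|_2\le1$ for all $i$, and for each $i\ne j$, $\mathbf{x}_i\ne\beta\mathbf{x}_j$ for all $\beta\in\mathbb{R}\setminus\{0\}$. Then, for any $\alpha>0$, the matrices $\mathbf{V}^\infty$ and $\mathbf{G}^\infty$ are strictly positive definite.
   Context: For $\mathbf{u}\ne0$: $\mathbf{x}^{\mathbf{u}}=\mathbf{u}\mathbf{u}^\top\mathbf{x}/\|\mathbf{u}\|_2^2$, $\mathbf{x}^{\mathbf{u}^\perp}=\mathbf{x}-\mathbf{x}^{\mathbf{u}}$. Define the $n\times n$ matrices $\mathbf{V}^\infty_{ij}=\mathbb{E}_{\mathbf{v}\sim N(0,\alpha^2\mathbf{I})}\langle\mathbf{x}_i^{\mathbf{v}^\perp},\mathbf{x}_j^{\mathbf{v}^\perp}\rangle\mathbb{1}\{\mathbf{v}^\top\mathbf{x}_i\ge0\}\mathbb{1}\{\mathbf{v}^\top\mathbf{x}_j\ge0\}$ and $\mathbf{G}^\infty_{ij}=\mathbb{E}_{\mathbf{v}\sim N(0,\alpha^2\mathbf{I})}\langle\mathbf{x}_i^{\mathbf{v}},\mathbf{x}_j^{\mathbf{v}}\rangle\mathbb{1}\{\mathbf{v}^\top\mathbf{x}_i\ge0\}\mathbb{1}\{\mathbf{v}^\top\mathbf{x}_j\ge0\}$. (Their least eigenvalues are denoted $\lambda_0$ and $\mu_0$.) *)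

theory Defs
  imports "HOL-Probability.Probability"
begin

definition gaussian_vec :: "real \<Rightarrow> (real ^ 'd) measure" where
  "gaussian_vec \<alpha> = density lborel (\<lambda>v. ennreal (\<Prod>k\<in>UNIV. normal_density 0 \<alpha> (v $ k)))"

text \<open>Projection of x onto the direction u (x^u) and onto its orthogonal complement.
  For u = 0 this gives 0 (division by zero); that is a null set under the Gaussian.\<close>
definition proj_on :: "real ^ 'd \<Rightarrow> real ^ 'd \<Rightarrow> real ^ 'd" where
  "proj_on u x = ((u \<bullet> x) / (norm u)\<^sup>2) *\<^sub>R u"

definition proj_perp :: "real ^ 'd \<Rightarrow> real ^ 'd \<Rightarrow> real ^ 'd" where
  "proj_perp u x = x - proj_on u x"

definition ind :: "bool \<Rightarrow> real" where
  "ind b = (if b then 1 else 0)"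

definition V_inf :: "real \<Rightarrow> ('n \<Rightarrow> real ^ 'd) \<Rightarrow> real ^ 'n ^ 'n" where
  "V_inf \<alpha> x = (\<chi> i j. \<integral>v. (proj_perp v (x i) \<bullet> proj_perp v (x j))
       * ind (v \<bullet> x i \<ge> 0) * ind (v \<bullet> x j \<ge> 0) \<partial>(gaussian_vec \<alpha>))"

definition G_inf :: "real \<Rightarrow> ('n \<Rightarrow> real ^ 'd) \<Rightarrow> real ^ 'n ^ 'n" where
  "G_inf \<alpha> x = (\<chi> i j. \<integral>v. (proj_on v (x i) \<bullet> proj_on v (x j))
       * ind (v \<bullet> x i \<ge> 0) * ind (v \<bullet> x j \<ge> 0) \<partial>(gaussian_vec \<alpha>))"

definition strictly_pos_def :: "real ^ 'n ^ 'n \<Rightarrow> bool" where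
  "strictly_pos_def M \<longleftrightarrow> transpose M = M \<and> (\<forall>c. c \<noteq> 0 \<longrightarrow> c \<bullet> (M *v c) > 0)"

end

theory Submission
  imports Defs
begin

lemma inner_meas[measurable]: "(\<lambda>v. v \<bullet> (y::real^'d)) \<in> borel_measurable borel"
  by (intro borel_measurable_continuous_onI continuous_intros)

lemma prod_basis_vec:
  fixes g :: "real \<Rightarrow> 'b::comm_monoid_mult" and v :: "real ^ 'd"
  shows "(\<Prod>k\<in>UNIV. g (v $ k)) = (\<Prod>b\<in>Basis. g (v \<bullet> b))"
proof -
  have B: "(Basis :: (real^'d) set) = (\<lambda>k. axis k 1) ` UNIV"
    by (auto simp: Basis_vec_def)
  have inj: "inj (\<lambda>k::'d. axis k (1::real))"
    by (auto simp: inj_def axis_eq_axis)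
  show ?thesis unfolding B
    by (subst prod.reindex[OF inj]) (simp add: inner_axis)
qed

lemma gaussian_finite:
  assumes "\<alpha> > 0"
  shows "finite_measure (gaussian_vec \<alpha> :: (real^'d) measure)"
proof (rule finite_measureI)
  have "emeasure (gaussian_vec \<alpha> :: (real^'d) measure) (space (gaussian_vec \<alpha>))
     = (\<integral>\<^sup>+v. ennreal (\<Prod>k\<in>UNIV. normal_density 0 \<alpha> ((v::real^'d) $ k)) \<partial>lborel)"
    unfolding gaussian_vec_def by (simp add: emeasure_density)
  also have "\<dots> = (\<integral>\<^sup>+v. (\<Prod>b\<in>Basis. ennreal (normal_density 0 \<alpha> ((v::real^'d) \<bullet> b))) \<partial>lborel)"
    by (simp add: prod_basis_vec prod_ennreal)
  also have "\<dots> = (\<Prod>b\<in>(Basis::(real^'d) set). (\<integral>\<^sup>+x. ennreal (normal_density 0 \<alpha> x) \<partial>lborel))"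
    by (subst nn_integral_lborel_prod) auto
  also have "\<dots> = 1"
  proof -
    interpret p: prob_space "density lborel (normal_density 0 \<alpha>)" using assms by (intro prob_space_normal_density)
    have "(\<integral>\<^sup>+x. ennreal (normal_density 0 \<alpha> x) \<partial>lborel) = 1"
      using p.emeasure_space_1 assms by (simp add: emeasure_density)
    then show ?thesis by simp
  qed
  finally show "emeasure (gaussian_vec \<alpha> :: (real^'d) measure) (space (gaussian_vec \<alpha>)) \<noteq> \<infinity>" by simp
qed

lemma gaussian_AE:
  assumes "\<alpha> > 0" "AE v in (gaussian_vec \<alpha> :: (real^'d) measure). P v"
  shows "AE v in lborel. P v"
proof -
  have "AE v in lborel. 0 < ennreal (\<Prod>k\<in>UNIV. normal_density 0 \<alpha> ((v::real^'d) $ k)) \<longrightarrow> P v"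
    using assms(2) unfolding gaussian_vec_def by (subst (asm) AE_density) auto
  moreover have "0 < ennreal (\<Prod>k\<in>UNIV. normal_density 0 \<alpha> ((v::real^'d) $ k))" for v
    using assms(1) by (simp add: normal_density_pos prod_pos)
  ultimately show ?thesis by auto
qed

lemma open_pos:
  fixes W :: "(real^'d) set"
  assumes "open W" "W \<noteq> {}" "AE v in lborel. v \<notin> W"
  shows False
proof -
  have "W \<in> null_sets lborel"
    using assms(3) by (subst AE_iff_null_sets) (auto intro: borel_open assms(1))
  then have "W \<in> null_sets lebesgue" by (simp add: null_sets_completionI)
  then have "negligible W" by (simp add: negligible_iff_null_sets)
  with open_not_negligible[OF assms(1,2)] show False by simp
qed

lemma ind_meas[measurable]: "(\<lambda>v. ind (v \<bullet> y \<ge> (0::real))) \<in> borel_measurable borel"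
proof -
  have [measurable]: "(\<lambda>v. v \<bullet> y) \<in> borel_measurable borel"
    by (intro borel_measurable_continuous_onI continuous_intros)
  show ?thesis unfolding ind_def by measurable
qed

lemma ind_bnd: "\<bar>ind b\<bar> \<le> 1" by (simp add: ind_def)

lemma quad_form:
  fixes P :: "real^'d \<Rightarrow> real^'d \<Rightarrow> real^'d" and x :: "'n::finite \<Rightarrow> real^'d"
  assumes meas: "\<And>y. (\<lambda>v. P v y) \<in> borel_measurable borel"
  and bnd: "\<And>v y. norm (P v y) \<le> norm y"
  and alpha: "\<alpha> > 0"
  and ex: "\<And>c. c \<noteq> 0 \<Longrightarrow> \<exists>W. open W \<and> W \<noteq> {} \<and>
            (\<forall>v\<in>W. (\<Sum>i\<in>UNIV. (c$i * ind (v \<bullet> x i \<ge> 0)) *\<^sub>R P v (x i)) \<noteq> 0)"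
  shows "strictly_pos_def (\<chi> i j. \<integral>v. (P v (x i) \<bullet> P v (x j)) * ind (v \<bullet> x i \<ge> 0) * ind (v \<bullet> x j \<ge> 0) \<partial>(gaussian_vec \<alpha>))"
proof -
  let ?\<mu> = "gaussian_vec \<alpha> :: (real^'d) measure"
  interpret fm: finite_measure ?\<mu> using gaussian_finite[OF alpha] .
  define f where "f i j v = (P v (x i) \<bullet> P v (x j)) * ind (v \<bullet> x i \<ge> 0) * ind (v \<bullet> x j \<ge> 0)" for i j v
  have [measurable]: "(\<lambda>v. P v y) \<in> borel_measurable ?\<mu>" for y
    using meas[of y] unfolding gaussian_vec_def by simp
  have [measurable]: "(\<lambda>v. ind (v \<bullet> y \<ge> (0::real))) \<in> borel_measurable ?\<mu>" for y
    unfolding gaussian_vec_def by simp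
  have fmeas: "f i j \<in> borel_measurable ?\<mu>" for i j
    unfolding f_def by measurable
  have fint: "integrable ?\<mu> (f i j)" for i j
  proof (rule fm.integrable_const_bound[where B="norm (x i) * norm (x j)"])
    show "AE v in ?\<mu>. norm (f i j v) \<le> norm (x i) * norm (x j)"
    proof (intro AE_I2)
      fix v
      have "\<bar>P v (x i) \<bullet> P v (x j)\<bar> \<le> norm (x i) * norm (x j)"
        by (rule order_trans[OF Cauchy_Schwarz_ineq2]) (intro mult_mono bnd; simp)
      moreover have "\<bar>ind (v \<bullet> x i \<ge> 0) * ind (v \<bullet> x j \<ge> 0)\<bar> \<le> 1"
        by (simp add: ind_def)
      ultimately have "\<bar>(P v (x i) \<bullet> P v (x j)) * (ind (v \<bullet> x i \<ge> 0) * ind (v \<bullet> x j \<ge> 0))\<bar> \<le> norm (x i) * norm (x j) * 1"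
        unfolding abs_mult by (intro mult_mono) auto
      then show "norm (f i j v) \<le> norm (x i) * norm (x j)" by (simp add: f_def mult.assoc)
    qed
  qed (rule fmeas)
  define M where "M = (\<chi> i j. integral\<^sup>L ?\<mu> (f i j))"
  have Meq: "(\<chi> i j. \<integral>v. (P v (x i) \<bullet> P v (x j)) * ind (v \<bullet> x i \<ge> 0) * ind (v \<bullet> x j \<ge> 0) \<partial>(gaussian_vec \<alpha>)) = M"
    unfolding M_def f_def by simp
  have "transpose M = M"
    unfolding M_def transpose_def f_def by (simp add: vec_eq_iff inner_commute mult_ac)
  moreover have "c \<bullet> (M *v c) > 0" if c0: "c \<noteq> 0" for c
  proof -
    define F where "F v = (\<Sum>i\<in>UNIV. (c$i * ind (v \<bullet> x i \<ge> 0)) *\<^sub>R P v (x i))" for v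
    have FF: "F v \<bullet> F v = (\<Sum>i\<in>UNIV. \<Sum>j\<in>UNIV. c$i * c$j * f i j v)" for v
      unfolding F_def f_def inner_sum_left inner_sum_right
      by (intro sum.cong refl) (simp add: algebra_simps inner_commute)
    have "c \<bullet> (M *v c) = (\<Sum>i\<in>UNIV. \<Sum>j\<in>UNIV. c$i * c$j * integral\<^sup>L ?\<mu> (f i j))"
      unfolding M_def inner_vec_def matrix_vector_mult_def
      by (simp add: sum_distrib_left mult_ac)
    also have "\<dots> = (\<integral>v. (\<Sum>i\<in>UNIV. \<Sum>j\<in>UNIV. c$i * c$j * f i j v) \<partial>?\<mu>)"
      using fint by (simp add: integral_sum)
    also have "\<dots> = (\<integral>v. F v \<bullet> F v \<partial>?\<mu>)" by (simp add: FF)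
    finally have eq: "c \<bullet> (M *v c) = (\<integral>v. F v \<bullet> F v \<partial>?\<mu>)" .
    have intF: "integrable ?\<mu> (\<lambda>v. F v \<bullet> F v)"
      unfolding FF using fint by auto
    obtain W where W: "open W" "W \<noteq> {}" "\<And>v. v \<in> W \<Longrightarrow> F v \<noteq> 0"
      using ex[OF c0] unfolding F_def by blast
    have "(\<integral>v. F v \<bullet> F v \<partial>?\<mu>) \<noteq> 0"
    proof
      assume "(\<integral>v. F v \<bullet> F v \<partial>?\<mu>) = 0"
      then have "AE v in ?\<mu>. F v \<bullet> F v = 0"
        using integral_nonneg_eq_0_iff_AE[OF intF] by simp
      then have "AE v in lborel. F v \<bullet> F v = 0" by (rule gaussian_AE[OF alpha])
      then have "AE v in lborel. v \<notin> W" by eventually_elim (use W in auto)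
      then show False using open_pos W by blast
    qed
    moreover have "(\<integral>v. F v \<bullet> F v \<partial>?\<mu>) \<ge> 0" by simp
    ultimately show ?thesis using eq by linarith
  qed
  ultimately show ?thesis unfolding Meq strictly_pos_def_def by blast
qed


lemma proj_on_bnd: "norm (proj_on v y) \<le> norm y"
proof (cases "v = 0")
  case True then show ?thesis by (simp add: proj_on_def)
next
  case False
  then have nv: "norm v > 0" by simp
  have "norm (proj_on v y) = \<bar>v \<bullet> y\<bar> / norm v"
    using nv by (simp add: proj_on_def power2_eq_square)
  also have "\<dots> \<le> norm v * norm y / norm v"
    using nv by (intro divide_right_mono Cauchy_Schwarz_ineq2) auto
  also have "\<dots> = norm y" using nv by simp
  finally show ?thesis .
qed

lemma proj_perp_sq:
  assumes "v \<noteq> 0"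
  shows "proj_perp v y \<bullet> proj_perp v y = y \<bullet> y - (v \<bullet> y)^2 / (norm v)^2"
proof -
  have nv: "(norm v)^2 = v \<bullet> v" by (simp add: power2_norm_eq_inner)
  have vv: "v \<bullet> v \<noteq> 0" using assms by simp
  have gen: "(y - k *\<^sub>R v) \<bullet> (y - k *\<^sub>R v) = y \<bullet> y - 2 * k * (v \<bullet> y) + k^2 * (v \<bullet> v)" for k
    by (simp add: inner_diff_left inner_diff_right inner_commute[of y v] algebra_simps power2_eq_square)
  have "proj_perp v y \<bullet> proj_perp v y = y \<bullet> y - 2 * ((v \<bullet> y) / (v \<bullet> v)) * (v \<bullet> y) + ((v \<bullet> y) / (v \<bullet> v))^2 * (v \<bullet> v)"
    unfolding proj_perp_def proj_on_def nv by (rule gen)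
  also have "\<dots> = y \<bullet> y - (v \<bullet> y)^2 / (v \<bullet> v)"
    using vv by (simp add: field_simps power2_eq_square)
  finally show ?thesis unfolding nv .
qed

lemma proj_perp_bnd: "norm (proj_perp v y) \<le> norm y"
proof (cases "v = 0")
  case True then show ?thesis by (simp add: proj_perp_def proj_on_def)
next
  case False
  have "(norm (proj_perp v y))^2 \<le> (norm y)^2"
    unfolding power2_norm_eq_inner proj_perp_sq[OF False] by simp
  then show ?thesis by (rule power2_le_imp_le) simp
qed


lemma proj_on_meas: "(\<lambda>v. proj_on v (y::real^'d)) \<in> borel_measurable borel"
  unfolding proj_on_def by measurable

lemma proj_perp_meas: "(\<lambda>v. proj_perp v (y::real^'d)) \<in> borel_measurable borel"
  unfolding proj_perp_def using proj_on_meas by measurable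

lemma avoid:
  fixes a :: "real^'d" and B :: "(real^'d) set"
  assumes "finite B" "\<And>b. b \<in> B \<Longrightarrow> \<exists>u. u \<bullet> a = 0 \<and> u \<bullet> b \<noteq> 0"
  shows "\<exists>v. v \<bullet> a = 0 \<and> (\<forall>b\<in>B. v \<bullet> b \<noteq> 0)"
  using assms
proof (induction B rule: finite_induct)
  case empty then show ?case by (intro exI[of _ 0]) simp
next
  case (insert b B)
  then obtain v where v: "v \<bullet> a = 0" "\<forall>b\<in>B. v \<bullet> b \<noteq> 0" by blast
  obtain u where u: "u \<bullet> a = 0" "u \<bullet> b \<noteq> 0" using insert by blast
  let ?bad = "{0} \<union> (\<lambda>b'. - (v \<bullet> b') / (u \<bullet> b')) ` B \<union> {- (v \<bullet> b) / (u \<bullet> b)}"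
  have "finite ?bad" using insert by simp
  then obtain t where t: "t \<notin> ?bad" using ex_new_if_finite[OF infinite_UNIV_char_0 \<open>finite ?bad\<close>] by blast
  let ?w = "v + t *\<^sub>R u"
  have "?w \<bullet> a = 0" using u v by (simp add: inner_add_left)
  moreover have "?w \<bullet> b' \<noteq> 0" if "b' \<in> insert b B" for b'
  proof
    assume h: "?w \<bullet> b' = 0"
    then have e: "v \<bullet> b' + t * (u \<bullet> b') = 0" by (simp add: inner_add_left)
    show False
    proof (cases "u \<bullet> b' = 0")
      case True
      with e have "v \<bullet> b' = 0" by simp
      with True that u v show False by auto
    next
      case False
      with e have "t = - (v \<bullet> b') / (u \<bullet> b')" by (simp add: field_simps)
      with that t show False by auto
    qed
  qed
  ultimately show ?case by blast
qed

lemma nonzero_orth: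
  fixes a :: "real^'d"
  assumes "CARD('d) \<ge> 2"
  shows "\<exists>u. u \<noteq> 0 \<and> u \<bullet> a = 0"
proof -
  obtain k l :: 'd where kl: "k \<noteq> l"
  proof -
    have "\<not> (\<forall>k l::'d. k = l)"
    proof
      assume "\<forall>k l::'d. k = l"
      then have "card (UNIV::'d set) \<le> Suc 0" by (subst card_le_Suc0_iff_eq) auto
      with assms show False by simp
    qed
    then show ?thesis using that by blast
  qed
  show ?thesis
  proof (cases "a $ k = 0 \<and> a $ l = 0")
    case True
    then show ?thesis
      by (intro exI[of _ "axis k 1"]) (simp add: inner_axis' axis_eq_0_iff)
  next
    case False
    let ?u = "(a $ l) *\<^sub>R axis k (1::real) - (a $ k) *\<^sub>R axis l 1"
    have cs: "?u $ k = a $ l" "?u $ l = - a $ k" using kl by (auto simp: axis_def)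
    have "?u \<noteq> 0"
    proof
      assume "?u = 0"
      then have z: "?u $ k = 0" "?u $ l = 0" by simp_all
      have "a $ l = 0" "a $ k = 0" using z cs by linarith+
      with False show False by simp
    qed
    moreover have "?u \<bullet> a = 0"
      by (simp add: inner_diff_left inner_axis' mult.commute)
    ultimately show ?thesis by blast
  qed
qed

lemma half_ball:
  fixes v0 a :: "real^'d"
  assumes "v0 \<bullet> a = 0" "a \<noteq> 0" "\<delta> > 0"
  shows "\<exists>p. ball p (\<delta>/2) \<subseteq> ball v0 \<delta> \<and> (\<forall>v\<in>ball p (\<delta>/2). v \<bullet> a > 0)"
proof -
  have na: "norm a > 0" using assms by simp
  define p where "p = v0 + (\<delta>/2/norm a) *\<^sub>R a"
  have dp: "dist v0 p = \<delta>/2" using na assms by (simp add: p_def dist_norm)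
  have pa: "p \<bullet> a = \<delta>/2 * norm a"
    using assms na by (simp add: p_def inner_add_left power2_norm_eq_inner[symmetric] power2_eq_square)
  have "ball p (\<delta>/2) \<subseteq> ball v0 \<delta>"
  proof
    fix w assume "w \<in> ball p (\<delta>/2)"
    moreover have "dist v0 w \<le> dist v0 p + dist p w" by (rule dist_triangle)
    ultimately show "w \<in> ball v0 \<delta>" using dp by auto
  qed
  moreover have "v \<bullet> a > 0" if "v \<in> ball p (\<delta>/2)" for v
  proof -
    have "\<bar>(v - p) \<bullet> a\<bar> \<le> norm (v - p) * norm a" by (rule Cauchy_Schwarz_ineq2)
    also have "\<dots> < \<delta>/2 * norm a"
      using that na by (intro mult_strict_right_mono) (auto simp: dist_norm norm_minus_commute)
    finally have "\<bar>(v - p) \<bullet> a\<bar> < \<delta>/2 * norm a" .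
    then show ?thesis using pa unfolding inner_diff_left abs_less_iff by linarith
  qed
  ultimately show ?thesis by blast
qed


lemma setup_pt:
  fixes x :: "'n::finite \<Rightarrow> real ^ 'd" and c :: "real^'n"
  assumes dim: "CARD('d) \<ge> 2"
    and nz: "\<And>i. x i \<noteq> 0"
    and nonpar: "\<And>i j \<beta>. i \<noteq> j \<Longrightarrow> \<beta> \<noteq> 0 \<Longrightarrow> x i \<noteq> \<beta> *\<^sub>R x j"
    and c0: "c \<noteq> 0"
  obtains i v0 r where "c$i \<noteq> 0" "v0 \<bullet> x i = 0" "v0 \<noteq> 0" "r > 0"
    "\<And>v j. v \<in> ball v0 r \<Longrightarrow> j \<noteq> i \<Longrightarrow> ind (v \<bullet> x j \<ge> 0) = ind (v0 \<bullet> x j \<ge> 0)"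
    "\<And>v. v \<in> ball v0 r \<Longrightarrow> v \<noteq> 0"
proof -
  obtain i where ci: "c$i \<noteq> 0" using c0 by (metis vec_eq_iff zero_index)
  obtain u0 where u0: "u0 \<noteq> 0" "u0 \<bullet> x i = 0" using nonzero_orth[OF dim] by blast
  define B where "B = x ` (UNIV - {i}) \<union> {u0}"
  have "finite B" by (simp add: B_def)
  moreover have "\<exists>u. u \<bullet> x i = 0 \<and> u \<bullet> b \<noteq> 0" if bB: "b \<in> B" for b
  proof (cases "b = u0")
    case True then show ?thesis using u0 by (intro exI[of _ u0]) simp
  next
    case False
    then obtain j where j: "j \<noteq> i" "b = x j" using bB by (auto simp: B_def)
    define lam where "lam = (x i \<bullet> x j) / (x i \<bullet> x i)"
    define u where "u = x j - lam *\<^sub>R x i"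
    have xi: "x i \<bullet> x i \<noteq> 0" using nz by simp
    have ui: "u \<bullet> x i = 0" using xi by (simp add: u_def lam_def inner_diff_left inner_commute[of "x i" "x j"])
    have "u \<bullet> x j \<noteq> 0"
    proof
      assume h: "u \<bullet> x j = 0"
      have "u \<bullet> u = u \<bullet> x j - lam * (u \<bullet> x i)"
        by (simp add: u_def inner_diff_right algebra_simps)
      with h ui have "u = 0" by simp
      then have xj: "x j = lam *\<^sub>R x i" by (simp add: u_def)
      show False
      proof (cases "lam = 0")
        case True with xj nz show False by simp
      next
        case False with xj nonpar[OF j(1) False] show False by simp
      qed
    qed
    then show ?thesis using ui j by blast
  qed
  ultimately obtain v0 where v0: "v0 \<bullet> x i = 0" "\<forall>b\<in>B. v0 \<bullet> b \<noteq> 0"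
    using avoid by metis
  define U where "U = (\<Inter>b\<in>B. {v. 0 < (v \<bullet> b) * (v0 \<bullet> b)})"
  have "open U" unfolding U_def using \<open>finite B\<close>
    by (intro open_INT ballI open_Collect_less continuous_intros) auto
  moreover have "v0 \<in> U" using v0 by (auto simp: U_def zero_less_mult_iff linorder_neq_iff)
  ultimately obtain r where r: "r > 0" "ball v0 r \<subseteq> U" by (meson open_contains_ball)
  show ?thesis
  proof (rule that[OF ci v0(1) _ r(1)])
    show "v0 \<noteq> 0" using v0 by (auto simp: B_def)
  next
    fix v j assume v: "v \<in> ball v0 r" and j: "j \<noteq> i"
    then have "0 < (v \<bullet> x j) * (v0 \<bullet> x j)" using r by (auto simp: U_def B_def)
    then show "ind (v \<bullet> x j \<ge> 0) = ind (v0 \<bullet> x j \<ge> 0)"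
      unfolding ind_def zero_less_mult_iff by auto
  next
    fix v assume v: "v \<in> ball v0 r"
    then have "0 < (v \<bullet> u0) * (v0 \<bullet> u0)" using r by (auto simp: U_def B_def)
    then show "v \<noteq> 0" by auto
  qed
qed


lemma split_sum:
  fixes x :: "'n::finite \<Rightarrow> real ^ 'd" and c :: "real^'n" and P :: "real^'d \<Rightarrow> real^'d \<Rightarrow> 'b::real_vector"
  assumes "\<And>j. j \<noteq> i \<Longrightarrow> ind (v \<bullet> x j \<ge> 0) = ind (v0 \<bullet> x j \<ge> 0)"
  shows "(\<Sum>j\<in>UNIV. (c$j * ind (v \<bullet> x j \<ge> 0)) *\<^sub>R P v (x j))
     = (c$i * ind (v \<bullet> x i \<ge> 0)) *\<^sub>R P v (x i) + (\<Sum>j\<in>UNIV-{i}. (c$j * ind (v0 \<bullet> x j \<ge> 0)) *\<^sub>R P v (x j))"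
proof -
  have "(\<Sum>j\<in>UNIV. (c$j * ind (v \<bullet> x j \<ge> 0)) *\<^sub>R P v (x j))
     = (c$i * ind (v \<bullet> x i \<ge> 0)) *\<^sub>R P v (x i) + (\<Sum>j\<in>UNIV-{i}. (c$j * ind (v \<bullet> x j \<ge> 0)) *\<^sub>R P v (x j))"
    by (rule sum.remove) auto
  also have "(\<Sum>j\<in>UNIV-{i}. (c$j * ind (v \<bullet> x j \<ge> 0)) *\<^sub>R P v (x j)) = (\<Sum>j\<in>UNIV-{i}. (c$j * ind (v0 \<bullet> x j \<ge> 0)) *\<^sub>R P v (x j))"
    using assms by (intro sum.cong) auto
  finally show ?thesis .
qed

lemma isCont_proj_perp: "v0 \<noteq> 0 \<Longrightarrow> isCont (\<lambda>v. proj_perp v y) v0"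
  unfolding proj_perp_def proj_on_def by (intro continuous_intros) auto

lemma ex_V:
  fixes x :: "'n::finite \<Rightarrow> real ^ 'd" and c :: "real^'n"
  assumes dim: "CARD('d) \<ge> 2"
    and nz: "\<And>i. x i \<noteq> 0"
    and nonpar: "\<And>i j \<beta>. i \<noteq> j \<Longrightarrow> \<beta> \<noteq> 0 \<Longrightarrow> x i \<noteq> \<beta> *\<^sub>R x j"
    and c0: "c \<noteq> 0"
  shows "\<exists>W. open W \<and> W \<noteq> {} \<and>
            (\<forall>v\<in>W. (\<Sum>i\<in>UNIV. (c$i * ind (v \<bullet> x i \<ge> 0)) *\<^sub>R proj_perp v (x i)) \<noteq> 0)"
proof -
  obtain i v0 r where ci: "c$i \<noteq> 0" and v0: "v0 \<bullet> x i = 0" "v0 \<noteq> 0" and r: "r > 0"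
    and same: "\<And>v j. v \<in> ball v0 r \<Longrightarrow> j \<noteq> i \<Longrightarrow> ind (v \<bullet> x j \<ge> 0) = ind (v0 \<bullet> x j \<ge> 0)"
    and vnz: "\<And>v. v \<in> ball v0 r \<Longrightarrow> v \<noteq> 0"
    using setup_pt[of x c, OF dim nz nonpar c0] by metis
  define S where "S v = (\<Sum>j\<in>UNIV-{i}. (c$j * ind (v0 \<bullet> x j \<ge> 0)) *\<^sub>R proj_perp v (x j))" for v
  have F: "(\<Sum>j\<in>UNIV. (c$j * ind (v \<bullet> x j \<ge> 0)) *\<^sub>R proj_perp v (x j))
     = (c$i * ind (v \<bullet> x i \<ge> 0)) *\<^sub>R proj_perp v (x i) + S v" if "v \<in> ball v0 r" for v
    unfolding S_def by (rule split_sum) (use same that in auto)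
  have cS: "isCont S v0" unfolding S_def using v0 by (intro continuous_intros isCont_proj_perp)
  have xi0: "x i \<noteq> 0" by (rule nz)
  show ?thesis
  proof (cases "S v0 = 0")
    case False
    obtain \<epsilon> where e: "\<epsilon> > 0" "\<And>y. dist v0 y < \<epsilon> \<Longrightarrow> S y \<noteq> 0"
      using continuous_at_avoid[OF cS False] by blast
    define \<delta> where "\<delta> = min \<epsilon> r"
    have "\<delta> > 0" using e r by (simp add: \<delta>_def)
    then obtain p where p: "ball p (\<delta>/2) \<subseteq> ball v0 \<delta>" "\<forall>v\<in>ball p (\<delta>/2). v \<bullet> (- x i) > 0"
      using half_ball[of v0 "- x i" \<delta>] v0 xi0 by auto
    show ?thesis
    proof (intro exI conjI ballI)
      show "open (ball p (\<delta>/2))" by simp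
      show "ball p (\<delta>/2) \<noteq> {}" using \<open>\<delta> > 0\<close> by simp
      fix v assume v: "v \<in> ball p (\<delta>/2)"
      then have vb: "dist v0 v < \<epsilon>" "v \<in> ball v0 r" using p by (auto simp: \<delta>_def)
      from p(2) v have "v \<bullet> (- x i) > 0" by blast
      then have "ind (v \<bullet> x i \<ge> 0) = 0" by (simp add: ind_def)
      then show "(\<Sum>j\<in>UNIV. (c$j * ind (v \<bullet> x j \<ge> 0)) *\<^sub>R proj_perp v (x j)) \<noteq> 0"
        using F[OF vb(2)] e(2)[OF vb(1)] by simp
    qed
  next
    case True
    define h where "h v = c$i *\<^sub>R proj_perp v (x i) + S v" for v
    have ch: "isCont h v0" unfolding h_def using v0 cS by (intro continuous_intros isCont_proj_perp)
    have "h v0 = c$i *\<^sub>R x i" using True v0 by (simp add: h_def proj_perp_def proj_on_def)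
    then have "h v0 \<noteq> 0" using ci xi0 by simp
    obtain \<epsilon> where e: "\<epsilon> > 0" "\<And>y. dist v0 y < \<epsilon> \<Longrightarrow> h y \<noteq> 0"
      using continuous_at_avoid[OF ch \<open>h v0 \<noteq> 0\<close>] by blast
    define \<delta> where "\<delta> = min \<epsilon> r"
    have "\<delta> > 0" using e r by (simp add: \<delta>_def)
    then obtain p where p: "ball p (\<delta>/2) \<subseteq> ball v0 \<delta>" "\<forall>v\<in>ball p (\<delta>/2). v \<bullet> x i > 0"
      using half_ball[of v0 "x i" \<delta>] v0 xi0 by auto
    show ?thesis
    proof (intro exI conjI ballI)
      show "open (ball p (\<delta>/2))" by simp
      show "ball p (\<delta>/2) \<noteq> {}" using \<open>\<delta> > 0\<close> by simp
      fix v assume v: "v \<in> ball p (\<delta>/2)"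
      then have vb: "dist v0 v < \<epsilon>" "v \<in> ball v0 r" using p by (auto simp: \<delta>_def)
      from p(2) v have "v \<bullet> x i > 0" by blast
      then have "ind (v \<bullet> x i \<ge> 0) = 1" by (simp add: ind_def)
      then show "(\<Sum>j\<in>UNIV. (c$j * ind (v \<bullet> x j \<ge> 0)) *\<^sub>R proj_perp v (x j)) \<noteq> 0"
        using F[OF vb(2)] e(2)[OF vb(1)] by (simp add: h_def)
    qed
  qed
qed

lemma proj_on_inner: "v \<noteq> 0 \<Longrightarrow> proj_on v y \<bullet> v = v \<bullet> y"
  by (simp add: proj_on_def power2_norm_eq_inner)

lemma ex_G:
  fixes x :: "'n::finite \<Rightarrow> real ^ 'd" and c :: "real^'n"
  assumes dim: "CARD('d) \<ge> 2"
    and nz: "\<And>i. x i \<noteq> 0"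
    and nonpar: "\<And>i j \<beta>. i \<noteq> j \<Longrightarrow> \<beta> \<noteq> 0 \<Longrightarrow> x i \<noteq> \<beta> *\<^sub>R x j"
    and c0: "c \<noteq> 0"
  shows "\<exists>W. open W \<and> W \<noteq> {} \<and>
            (\<forall>v\<in>W. (\<Sum>i\<in>UNIV. (c$i * ind (v \<bullet> x i \<ge> 0)) *\<^sub>R proj_on v (x i)) \<noteq> 0)"
proof -
  obtain i v0 r where ci: "c$i \<noteq> 0" and v0: "v0 \<bullet> x i = 0" "v0 \<noteq> 0" and r: "r > 0"
    and same: "\<And>v j. v \<in> ball v0 r \<Longrightarrow> j \<noteq> i \<Longrightarrow> ind (v \<bullet> x j \<ge> 0) = ind (v0 \<bullet> x j \<ge> 0)"
    and vnz: "\<And>v. v \<in> ball v0 r \<Longrightarrow> v \<noteq> 0"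
    using setup_pt[of x c, OF dim nz nonpar c0] by metis
  define w where "w = (\<Sum>j\<in>UNIV-{i}. (c$j * ind (v0 \<bullet> x j \<ge> 0)) *\<^sub>R x j)"
  define F where "F v = (\<Sum>j\<in>UNIV. (c$j * ind (v \<bullet> x j \<ge> 0)) *\<^sub>R proj_on v (x j))" for v
  have FF: "F v \<bullet> v = c$i * ind (v \<bullet> x i \<ge> 0) * (v \<bullet> x i) + w \<bullet> v" if v: "v \<in> ball v0 r" for v
  proof -
    have "F v = (c$i * ind (v \<bullet> x i \<ge> 0)) *\<^sub>R proj_on v (x i) + (\<Sum>j\<in>UNIV-{i}. (c$j * ind (v0 \<bullet> x j \<ge> 0)) *\<^sub>R proj_on v (x j))"
      unfolding F_def by (rule split_sum) (use same v in auto)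
    then have "F v \<bullet> v = c$i * ind (v \<bullet> x i \<ge> 0) * (proj_on v (x i) \<bullet> v) + (\<Sum>j\<in>UNIV-{i}. (c$j * ind (v0 \<bullet> x j \<ge> 0)) * (proj_on v (x j) \<bullet> v))"
      by (simp add: inner_add_left inner_sum_left)
    also have "\<dots> = c$i * ind (v \<bullet> x i \<ge> 0) * (v \<bullet> x i) + (\<Sum>j\<in>UNIV-{i}. (c$j * ind (v0 \<bullet> x j \<ge> 0)) * (v \<bullet> x j))"
      using vnz[OF v] by (simp add: proj_on_inner)
    also have "(\<Sum>j\<in>UNIV-{i}. (c$j * ind (v0 \<bullet> x j \<ge> 0)) * (v \<bullet> x j)) = w \<bullet> v"
      unfolding w_def inner_sum_left by (intro sum.cong refl) (simp add: inner_commute)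
    finally show ?thesis .
  qed
  have xi0: "x i \<noteq> 0" by (rule nz)
  show ?thesis
  proof (cases "w = 0")
    case True
    obtain p where p: "ball p (r/2) \<subseteq> ball v0 r" "\<forall>v\<in>ball p (r/2). v \<bullet> x i > 0"
      using half_ball[of v0 "x i" r] v0 xi0 r by auto
    show ?thesis unfolding F_def[symmetric]
    proof (intro exI conjI ballI)
      show "open (ball p (r/2))" by simp
      show "ball p (r/2) \<noteq> {}" using r by simp
      fix v assume v: "v \<in> ball p (r/2)"
      from p(2) v have pos: "v \<bullet> x i > 0" by blast
      then have "ind (v \<bullet> x i \<ge> 0) = 1" by (simp add: ind_def)
      then have "F v \<bullet> v \<noteq> 0" using FF[of v] v p(1) True ci pos by auto
      then show "F v \<noteq> 0" by auto
    qed
  next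
    case False
    obtain p where p: "ball p (r/2) \<subseteq> ball v0 r" "\<forall>v\<in>ball p (r/2). v \<bullet> (- x i) > 0"
      using half_ball[of v0 "- x i" r] v0 xi0 r by auto
    have nw: "norm w > 0" using False by simp
    have "\<exists>q. q \<in> ball p (r/2) \<and> w \<bullet> q \<noteq> 0"
    proof (cases "w \<bullet> p = 0")
      case False then show ?thesis using r by (intro exI[of _ p]) simp
    next
      case True
      define q where "q = p + (r/4/norm w) *\<^sub>R w"
      have "dist p q = r/4" using nw r by (simp add: q_def dist_norm)
      then have "q \<in> ball p (r/2)" using r by simp
      moreover have wq: "w \<bullet> q = r/4 * norm w"
        using True nw by (simp add: q_def inner_add_right power2_norm_eq_inner[symmetric] power2_eq_square)
      have "0 < r/4 * norm w" using nw r by simp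
      with wq have "w \<bullet> q \<noteq> 0" by simp
      ultimately show ?thesis by blast
    qed
    then obtain q where q: "q \<in> ball p (r/2)" "w \<bullet> q \<noteq> 0" by blast
    show ?thesis unfolding F_def[symmetric]
    proof (intro exI conjI ballI)
      show "open (ball p (r/2) \<inter> {v. w \<bullet> v \<noteq> 0})"
        by (intro open_Int open_ball open_Collect_neq continuous_intros)
      show "ball p (r/2) \<inter> {v. w \<bullet> v \<noteq> 0} \<noteq> {}" using q by blast
      fix v assume v: "v \<in> ball p (r/2) \<inter> {v. w \<bullet> v \<noteq> 0}"
      then have vb: "v \<in> ball p (r/2)" and wv: "w \<bullet> v \<noteq> 0" by auto
      from p(2) vb have "v \<bullet> (- x i) > 0" by blast
      then have "ind (v \<bullet> x i \<ge> 0) = 0" by (simp add: ind_def)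
      then have "F v \<bullet> v \<noteq> 0" using FF[of v] vb p(1) wv by auto
      then show "F v \<noteq> 0" by auto
    qed
  qed
qed


theorem lemma4p1:
  fixes x :: "'n::finite \<Rightarrow> real ^ 'd" and y :: "'n \<Rightarrow> real" and \<alpha> :: real
  assumes dim: "CARD('d) \<ge> 2"
    and nz: "\<And>i. x i \<noteq> 0"
    and bnd: "\<And>i. norm (x i) \<le> 1"
    and nonpar: "\<And>i j \<beta>. i \<noteq> j \<Longrightarrow> \<beta> \<noteq> 0 \<Longrightarrow> x i \<noteq> \<beta> *\<^sub>R x j"
    and alpha: "\<alpha> > 0"
  shows "strictly_pos_def (V_inf \<alpha> x) \<and> strictly_pos_def (G_inf \<alpha> x)"
proof
  show "strictly_pos_def (V_inf \<alpha> x)"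
    unfolding V_inf_def
    by (rule quad_form[OF proj_perp_meas proj_perp_bnd alpha ex_V[of x, OF dim nz nonpar]])
next
  show "strictly_pos_def (G_inf \<alpha> x)"
    unfolding G_inf_def
    by (rule quad_form[OF proj_on_meas proj_on_bnd alpha ex_G[of x, OF dim nz nonpar]])
qed

end
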